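(* Let $E$ be an integral regular elliptic curve (genus $1$) over $\mathbb{F}_q$, let $\mathbf{n}_{m-1}$ be a tuple of positive integers, $Q=q_{\mathbf{n}_{m-1}}$, and let $a$, $\zeta^*$, $v^*_k$, $\beta^*_n$ be as in the context (assuming $\alpha_0\neq0$). Then, as formal power series in $x$ (the infinite product converging coefficientwise), $$\sum_{n=0}^\infty\beta^*_n\,x^n=\prod_{k=1}^\infty\frac{1-aQ^{-k}x+Q^{1-2k}x^2}{(1-Q^{-k}x)(1-Q^{1-k}x)};$$ equivalently, with $x=Q^{-s}$, $\sum_{n\ge0}\beta^*_nQ^{-ns}=\prod_{k\ge1}\zeta^*(s+k)$. Equivalently again, $\beta^*_n=b_n$ for all $n\ge0$, where $\sum_{n\ge0}b_nx^n=\exp\bigl(\sum_{k\ge1}\frac{N_k}{Q^k-1}\frac{x^k}{k}\bigr)$ with $N_k=Q^k+1-\omega_1^k-\omega_2^k$ and $\omega_1,\omega_2$ the roots of $z^2-az+Q$.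
   Context: Let $\zeta_E(s)=\sum_{D\ge 0}N(D)^{-s}$ be the Artin zeta function of $E$ and $\widehat\zeta_E(s)=\zeta_E(s)$ its complete Artin zeta function (genus $1$). Derived zeta functions are defined recursively (here $g=1$). For the empty tuple $\mathbf{n}_{-1}=()$ put $q_{\mathbf{n}_{-1}}=q$, $T_{\mathbf{n}_{-1}}=q^{-s}$, $\widehat\zeta^{(\mathbf{n}_{-1})}_E=\widehat\zeta_E$. For a tuple $\mathbf{n}_m=(n_0,\dots,n_m)$ of positive integers put $\mathbf{n}_{m-1}=(n_0,\dots,n_{m-1})$, $q_{\mathbf{n}_m}=q^{n_0\cdots n_m}$, $T_{\mathbf{n}_m}=q^{-n_0\cdots n_ms}$; with $\widehat Z^{(\mathbf{n}_{m-1})}_E(T_{\mathbf{n}_{m-1}}):=\widehat\zeta^{(\mathbf{n}_{m-1})}_E(s)$, $\widehat\zeta^{(\mathbf{n}_{m-1})}_E(1):=\operatorname{Res}_{T_{\mathbf{n}_{m-1}}=1}\widehat Z^{(\mathbf{n}_{m-1})}_E$, $\widehat v_N=\prod_{k=1}^N\widehat\zeta^{(\mathbf{n}_{m-1})}_E(k)$, $$\widehat\zeta^{(\mathbf{n}_m)}_E(s)=\sum_{a=1}^{n_m}\Biggl(\sum_{\substack{k_1,\dots,k_p>0\\ \sum k_i=n_m-a}}\frac{\widehat v_{k_1}\cdots\widehat v_{k_p}}{\prod_{j=1}^{p-1}(1-q_{\mathbf{n}_{m-1}}^{k_j+k_{j+1}})}\frac{1}{1-q_{\mathbf{n}_{m-1}}^{n_ms-n_m+a+k_p}}\Biggr)\widehat\zeta^{(\mathbf{n}_{m-1})}_E(n_ms-n_m+a)\Biggl(\sum_{\substack{l_1,\dots,l_r>0\\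 \sum l_i=a-1}}\frac{1}{1-q_{\mathbf{n}_{m-1}}^{-n_ms+n_m-a+1+l_1}}\frac{\widehat v_{l_1}\cdots\widehat v_{l_r}}{\prod_{j=1}^{r-1}(1-q_{\mathbf{n}_{m-1}}^{l_j+l_{j+1}})}\Biggr),$$ inner sums over ordered tuples of positive integers, an empty-composition sum being $1$. For the tuple $\mathbf{n}_{m-1}$, with $Q=q_{\mathbf{n}_{m-1}}$ and $T=Q^{-s}$, one can write $\widehat\zeta^{(\mathbf{n}_{m-1})}_E(s)=\alpha_0\cdot\frac{1-aT+QT^2}{(1-T)(1-QT)}$ with numbers $\alpha_0=\alpha^{(\mathbf{n}_{m-1})}_E(0)$ and $a$. Normalization: $\zeta^*(s):=\frac{1-aT+QT^2}{(1-T)(1-QT)}$, $\zeta^*(1):=\operatorname{Res}_{T=1}\zeta^*=\frac{Q+1-a}{Q-1}$, $v^*_k:=\prod_{j=1}^k\zeta^*(j)$, $\beta^*_0:=1$ and for $n\ge1$ $$\beta^*_n:=\sum_{\substack{k_1,\dots,k_p>0\\k_1+\cdots+k_p=n}}\frac{v^*_{k_1}\cdots v^*_{k_p}}{\prod_{j=1}^{p-1}(1-Q^{k_j+k_{j+1}})},$$ which is the $(\mathbf{n}_{m-1},n)$-derived beta invariant of $E$ computed from the normalized function $\zeta^*$. *)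

theory Defs
  imports "HOL-Analysis.Analysis" "HOL-Computational_Algebra.Formal_Power_Series"
begin

text \<open>Normalized zeta function zeta*(s) as a function of T = Q^(-s).\<close>
definition zeta_star_T :: "real \<Rightarrow> real \<Rightarrow> real \<Rightarrow> real" where
  "zeta_star_T Q a T = (1 - a * T + Q * T^2) / ((1 - T) * (1 - Q * T))"

text \<open>Special values zeta*(j), j a positive integer; zeta*(1) is the residue at T = 1.\<close>
definition zeta_star_val :: "real \<Rightarrow> real \<Rightarrow> nat \<Rightarrow> real" where
  "zeta_star_val Q a j =
     (if j = 1 then (Q + 1 - a) / (Q - 1) else zeta_star_T Q a (1 / Q ^ j))"

definition v_star :: "real \<Rightarrow> real \<Rightarrow> nat \<Rightarrow> real" where
  "v_star Q a k = (\<Prod>j = 1..k. zeta_star_val Q a j)"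

definition compositions :: "nat \<Rightarrow> nat list set" where
  "compositions n = {ks. (\<forall>k\<in>set ks. 0 < k) \<and> sum_list ks = n}"

definition beta_star :: "real \<Rightarrow> real \<Rightarrow> nat \<Rightarrow> real" where
  "beta_star Q a n =
     (\<Sum>ks\<in>compositions n.
        (\<Prod>k\<leftarrow>ks. v_star Q a k) /
        (\<Prod>j<length ks - 1. (1 - Q ^ (ks ! j + ks ! (j + 1)))))"

definition prod_factor :: "real \<Rightarrow> real \<Rightarrow> nat \<Rightarrow> real fps" where
  "prod_factor Q a k =
     (1 - fps_const (a / Q ^ k) * fps_X + fps_const (Q / Q ^ (2 * k)) * fps_X ^ 2) *
     inverse ((1 - fps_const (1 / Q ^ k) * fps_X) * (1 - fps_const (Q / Q ^ k) * fps_X))"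

definition prime_power :: "nat \<Rightarrow> bool" where
  "prime_power q = (\<exists>p r. prime p \<and> r > 0 \<and> q = p ^ r)"

end

theory Submission
  imports Defs
begin

fun cc :: "real \<Rightarrow> nat \<Rightarrow> nat \<Rightarrow> real" where
  "cc Q N 0 = 1"
| "cc Q N (Suc l) = cc Q N l * (- (Q ^ Suc l)) * (1 - Q ^ (N - l)) / (1 - Q ^ Suc l)"

fun bb :: "real \<Rightarrow> real \<Rightarrow> nat \<Rightarrow> real" where
  "bb Q a 0 = 1"
| "bb Q a (Suc 0) = (Q + 1 - a) / (Q - 1)"
| "bb Q a (Suc (Suc n)) = ((Q ^ (n+1) + Q ^ (n+2) - a) * bb Q a (Suc n) + (Q - Q ^ (n+1)) * bb Q a n) / (Q ^ (n+2) - 1)"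

declare bb.simps(3)[simp del]
declare cc.simps(2)[simp del]

definition phi :: "real \<Rightarrow> real \<Rightarrow> nat \<Rightarrow> nat \<Rightarrow> real" where
  "phi Q a n l = cc Q (n - 1) l * bb Q a (n - l)"

definition Phi :: "real \<Rightarrow> real \<Rightarrow> nat \<Rightarrow> real \<Rightarrow> real" where
  "Phi Q a n t = (\<Sum>l\<le>n. phi Q a n l * t ^ l)"

lemma pow_gt1: "(1::real) < Q \<Longrightarrow> 0 < k \<Longrightarrow> 1 < Q ^ k"
  by (rule one_less_power)

lemma pow_ne1: "(1::real) < Q \<Longrightarrow> 0 < k \<Longrightarrow> 1 - Q ^ k \<noteq> 0"
  using pow_gt1[of Q k] by linarith

lemma cc_zero: "N < l \<Longrightarrow> cc Q N l = 0"
proof (induction l)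
  case 0 then show ?case by simp
next
  case (Suc l)
  show ?case
  proof (cases "l = N")
    case True then show ?thesis by (simp add: cc.simps(2))
  next
    case False then have "N < l" using Suc.prems by simp
    then show ?thesis using Suc.IH by (simp add: cc.simps(2))
  qed
qed

lemma cc_Suc_Suc:
  assumes Q: "1 < Q"
  shows "cc Q (Suc N) (Suc l) = - (Q ^ Suc l) * (1 - Q ^ Suc N) / (1 - Q ^ Suc l) * cc Q N l"
proof (induction l)
  case 0 then show ?case by (simp add: cc.simps(2))
next
  case (Suc l)
  have n1: "1 - Q ^ Suc l \<noteq> 0" "1 - Q ^ Suc (Suc l) \<noteq> 0" by (rule pow_ne1[OF Q], simp)+
  have e1: "cc Q (Suc N) (Suc (Suc l)) = cc Q (Suc N) (Suc l) * (- (Q ^ Suc (Suc l))) * (1 - Q ^ (N - l)) / (1 - Q ^ Suc (Suc l))"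
    by (simp add: cc.simps(2))
  have e2: "cc Q N (Suc l) = cc Q N l * (- (Q ^ Suc l)) * (1 - Q ^ (N - l)) / (1 - Q ^ Suc l)"
    by (simp add: cc.simps(2))
  have ab: "\<And>x y u c z w v::real. (- x * y / u * c) * (- z) * w / v = - z * y / v * (c * (- x) * w / u)"
    by (simp add: divide_inverse algebra_simps)
  show ?case by (simp only: e1 e2 Suc.IH ab)
qed

lemma cc_0 [simp]: "cc Q N 0 = 1" by simp

lemma phi_zero: "n < l \<Longrightarrow> phi Q a n l = 0"
  unfolding phi_def by (cases n) (auto simp: cc_zero)

lemma bb_rec:
  assumes Q: "1 < Q"
  shows "(1 - Q ^ (m+2)) * bb Q a (m+2) = (a - Q ^ (m+1) - Q ^ (m+2)) * bb Q a (m+1) - Q * (1 - Q ^ m) * bb Q a m"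
proof -
  have "Q ^ (m+2) - 1 \<noteq> 0" using pow_ne1[OF Q, of "m+2"] by simp
  then show ?thesis
    by (simp add: field_simps bb.simps(3))
qed

lemma cc_0_Suc [simp]: "cc Q 0 (Suc l) = 0"
  by (simp add: cc.simps(2))

lemma phi_0: "phi Q a 0 l = (if l = 0 then 1 else 0)"
  unfolding phi_def by (cases l) auto

lemma key_alg:
  fixes Q x y a g B0 B1 B2 d1 d2 d3 :: real
  assumes d1: "d1 = 1 - Q*x" "d1 \<noteq> 0" and d2: "d2 = 1 - Q^2*x" "d2 \<noteq> 0" and d3: "d3 = 1 - Q^2*y" "d3 \<noteq> 0"
    and br: "d3*B2 = (a - Q*y - Q^2*y)*B1 - Q*(1-y)*B0"
  shows "(1 - Q^3*x*y) * ((-(Q*x)*(1 - Q^2*x*y)/d1*g) * B2) =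
     (g*(-(Q*x))*(1-Q*y)/d1*(-(Q^2*x))*(1-y)/d2) * B0 * d2
   + (g*(-(Q*x))*(1-Q*y)/d1) * B1 * (a*(Q*x) - (Q^2*x*y + Q^3*x*y))
   + g*B2*(Q^5*x^2*y^2 - Q*x)" (is "?L = ?R")
proof -
  have L: "?L * (d1*d3) = (1 - Q^3*x*y) * (-(Q*x)*(1 - Q^2*x*y)*g) * B2 * d3"
    using d1(2) d3(2) by (simp add: field_simps)
  have R: "?R * (d1*d3) = (g*(-(Q*x))*(1-Q*y)*(-(Q^2*x))*(1-y)) * B0 * d3
   + (g*(-(Q*x))*(1-Q*y)) * B1 * (a*(Q*x) - (Q^2*x*y + Q^3*x*y)) * d3
   + g*B2*(Q^5*x^2*y^2 - Q*x) * d1 * d3"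
    using d1(2) d2(2) d3(2) by (simp add: field_simps)
  have P: "(1 - Q^3*x*y) * (-(Q*x)*(1 - Q^2*x*y)*g) * B2 * d3 = (g*(-(Q*x))*(1-Q*y)*(-(Q^2*x))*(1-y)) * B0 * d3
   + (g*(-(Q*x))*(1-Q*y)) * B1 * (a*(Q*x) - (Q^2*x*y + Q^3*x*y)) * d3
   + g*B2*(Q^5*x^2*y^2 - Q*x) * d1 * d3"
    using d1(1) d3(1) br by algebra
  have E: "?L * (d1*d3) = ?R * (d1*d3)" using L R P by simp
  have nz: "d1 * d3 \<noteq> 0" using d1(2) d3(2) by simp
  show ?thesis using E mult_right_cancel[OF nz] by blast
qed

lemma coef_id:
  assumes Q: "1 < Q"
  shows "(1 - Q ^ (N+1)) * phi Q a (N+1) j =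
    phi Q a N (j+1) * (1 - Q ^ (j+1)) + phi Q a N j * (a * Q ^ j - (Q ^ N + Q ^ (N+1)))
    + (if j = 0 then 0 else phi Q a N (j - 1) * (Q ^ (2*N+1) - Q ^ j))"
proof (cases N)
  case 0
  have Q1: "Q - 1 \<noteq> 0" using Q by simp
  show ?thesis
  proof (cases j)
    case 0 then show ?thesis using \<open>N = 0\<close> Q1 by (simp add: phi_def field_simps)
  next
    case (Suc i)
    then show ?thesis using \<open>N = 0\<close> by (cases i) (auto simp: phi_def)
  qed
next
  case (Suc M)
  have ph1: "phi Q a (Suc (Suc M)) l = cc Q (M+1) l * bb Q a (M+2-l)" for l
    by (simp add: phi_def)
  have ph0: "phi Q a (Suc M) l = cc Q M l * bb Q a (M+1-l)" for l
    by (simp add: phi_def)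
  have G: "(1 - Q ^ (M+2)) * (cc Q (M+1) j * bb Q a (M+2-j)) =
    cc Q M (j+1) * bb Q a (M+1-(j+1)) * (1 - Q ^ (j+1)) + cc Q M j * bb Q a (M+1-j) * (a * Q ^ j - (Q ^ (M+1) + Q ^ (M+2)))
    + (if j = 0 then 0 else cc Q M (j - 1) * bb Q a (M+1-(j-1)) * (Q ^ (2*M+3) - Q ^ j))"
  proof (cases j)
    case 0
    have c1: "cc Q M 1 * (1 - Q) = - Q * (1 - Q ^ M)"
      using pow_ne1[OF Q, of 1] by (simp add: field_simps cc.simps(2))
    have "(1 - Q ^ (M+2)) * bb Q a (M+2) = (a - Q ^ (M+1) - Q ^ (M+2)) * bb Q a (M+1) - Q * (1 - Q ^ M) * bb Q a M"
      by (rule bb_rec[OF Q])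
    moreover have "cc Q M 1 * bb Q a M * (1 - Q) = - Q * (1 - Q ^ M) * bb Q a M"
      using c1 by (metis mult.assoc mult.commute)
    ultimately show ?thesis unfolding 0
      by (simp add: algebra_simps)
  next
    case (Suc i)
    note j = Suc
    show ?thesis
    proof (cases "i \<le> M")
      case False
      then have "M + 1 < j" using j by simp
      then show ?thesis using j by (simp add: cc_zero)
    next
      case True
      define \<gamma> where "\<gamma> = cc Q M i"
      have ni: "1 - Q ^ Suc i \<noteq> 0" by (rule pow_ne1[OF Q]) simp
      have cA: "cc Q (M+1) (i+1) = - (Q ^ Suc i) * (1 - Q ^ Suc M) / (1 - Q ^ Suc i) * \<gamma>"
        using cc_Suc_Suc[OF Q, of M i] by (simp add: \<gamma>_def)
      have cB: "cc Q M (i+1) = \<gamma> * (- (Q ^ Suc i)) * (1 - Q ^ (M - i)) / (1 - Q ^ Suc i)"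
        by (simp add: \<gamma>_def cc.simps(2))
      show ?thesis
      proof (cases "i = M")
        case True
        have z1: "cc Q M (i+1) = 0" "cc Q M (i+2) = 0" using True by (auto intro!: cc_zero)
        have e: "Q ^ (2 * M + 3) = Q ^ (M+1) * Q ^ (M+2)"
        proof -
          have "2 * M + 3 = (M+1) + (M+2)" by simp
          then show ?thesis by (metis power_add)
        qed
        have cA2: "cc Q (M+1) (Suc M) = - (Q ^ (M+1)) * cc Q M M"
          using cA ni True by (simp add: \<gamma>_def)
        have e2: "(1 - Q ^ (M+2)) * (- (Q ^ (M+1))) = Q ^ (2*M+3) - Q ^ (M+1)"
          using e by (simp add: algebra_simps)
        have ix: "M + 2 - Suc M = 1" "M + 1 - (Suc M + 1) = 0" "M + 1 - Suc M = 0" "M + 1 - (Suc M - 1) = 1" "Suc M - 1 = M"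
          by auto
        have "(1 - Q ^ (M+2)) * (cc Q (M+1) j * bb Q a (M+2-j)) = ((1 - Q ^ (M+2)) * (- (Q ^ (M+1)))) * (cc Q M M * bb Q a 1)"
          by (simp only: j True ix cA2 mult_ac)
        also have "\<dots> = (Q ^ (2*M+3) - Q ^ (M+1)) * (cc Q M M * bb Q a 1)"
          unfolding e2 by (rule refl)
        also have "\<dots> = cc Q M (j - 1) * bb Q a (M+1-(j-1)) * (Q ^ (2*M+3) - Q ^ j)"
          using j True by (simp add: mult_ac)
        finally show ?thesis using z1 j True by simp
      next
        case False
        define m where "m = M - i - 1"
        have m: "M = i + 1 + m" using \<open>i \<le> M\<close> False unfolding m_def by arith
        have ni2: "1 - Q ^ Suc (Suc i) \<noteq> 0" by (rule pow_ne1[OF Q]) simp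
        have cC: "cc Q M (Suc (Suc i)) = cc Q M (Suc i) * (- (Q ^ Suc (Suc i))) * (1 - Q ^ (M - Suc i)) / (1 - Q ^ Suc (Suc i))"
          by (simp add: cc.simps(2))
        have br: "(1 - Q ^ (m+2)) * bb Q a (m+2) = (a - Q ^ (m+1) - Q ^ (m+2)) * bb Q a (m+1) - Q * (1 - Q ^ m) * bb Q a m"
          by (rule bb_rec[OF Q])
        have i1: "M + 2 - j = m + 2" "M + 1 - (j+1) = m" "M + 1 - j = m + 1" "M + 1 - (j - 1) = m + 2" "M - i = m + 1" "M - Suc i = m"
          using m j by auto
        have cC': "cc Q M (Suc (Suc i)) = cc Q M (Suc i) * (- (Q ^ Suc (Suc i))) * (1 - Q ^ m) / (1 - Q ^ Suc (Suc i))"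
          using cC i1 by simp
        have cB': "cc Q M (Suc i) = \<gamma> * (- (Q ^ Suc i)) * (1 - Q ^ (m+1)) / (1 - Q ^ Suc i)"
          using cB i1 by simp
        have cA': "cc Q (M+1) (Suc i) = - (Q ^ Suc i) * (1 - Q ^ (i + 2 + m)) / (1 - Q ^ Suc i) * \<gamma>"
          using cA m by simp
        have "(1 - Q ^ (i + 1 + m + 2)) * (cc Q (M+1) (Suc i) * bb Q a (m+2)) =
          cc Q M (Suc (Suc i)) * bb Q a m * (1 - Q ^ (Suc (Suc i))) + cc Q M (Suc i) * bb Q a (m+1) * (a * Q ^ (Suc i) - (Q ^ (i + 1 + m +1) + Q ^ (i+1+m+2)))
          + \<gamma> * bb Q a (m+2) * (Q ^ (2*(i+1+m)+3) - Q ^ (Suc i))"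
        proof -
          define x where "x = Q^i"
          define y where "y = Q^m"
          have pw: "Q ^ Suc i = Q*x" "Q ^ (i + 2 + m) = Q^2*x*y" "Q^(m+1) = Q*y" "Q ^ Suc (Suc i) = Q^2*x"
            "Q^(i+1+m+2) = Q^3*x*y" "Q^(i+1+m+1) = Q^2*x*y" "Q^(m+2) = Q^2*y" "Q^m = y"
            unfolding x_def y_def by (simp_all add: power_add power2_eq_square power3_eq_cube mult_ac)
          have pw2: "Q^(2*(i+1+m)+3) = Q^5*x^2*y^2"
            unfolding x_def y_def by (simp add: power_add power_mult[symmetric] mult_ac)
          have KA: "(1 - Q^3*x*y) * ((-(Q*x)*(1 - Q^2*x*y)/(1 - Q*x)*\<gamma>) * bb Q a (m+2)) =
             (\<gamma>*(-(Q*x))*(1-Q*y)/(1 - Q*x)*(-(Q^2*x))*(1-y)/(1 - Q^2*x)) * bb Q a m * (1 - Q^2*x)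
           + (\<gamma>*(-(Q*x))*(1-Q*y)/(1 - Q*x)) * bb Q a (m+1) * (a*(Q*x) - (Q^2*x*y + Q^3*x*y))
           + \<gamma>*bb Q a (m+2)*(Q^5*x^2*y^2 - Q*x)"
          proof (rule key_alg)
            show "1 - Q*x = 1 - Q*x" "1 - Q^2*x = 1 - Q^2*x" "1 - Q^2*y = 1 - Q^2*y" by simp_all
            show "1 - Q*x \<noteq> 0" using ni unfolding pw(1) by assumption
            show "1 - Q^2*x \<noteq> 0" using ni2 unfolding pw(4) by assumption
            show "1 - Q^2*y \<noteq> 0" using pow_ne1[OF Q, of "m+2"] unfolding pw(7) by simp
            show "(1 - Q^2*y) * bb Q a (m+2) = (a - Q*y - Q^2*y) * bb Q a (m+1) - Q*(1-y) * bb Q a m"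
              using br unfolding pw .
          qed
          show ?thesis unfolding cC' cB' cA' pw pw2 by (rule KA)
        qed
        then show ?thesis unfolding j using i1 m by (simp add: \<gamma>_def)
      qed
    qed
  qed
  have p1: "phi Q a (N+1) j = cc Q (M+1) j * bb Q a (M+2-j)" by (simp add: phi_def Suc)
  have p2: "phi Q a N (j+1) = cc Q M (j+1) * bb Q a (M+1-(j+1))" by (simp add: phi_def Suc)
  have p3: "phi Q a N j = cc Q M j * bb Q a (M+1-j)" by (simp add: phi_def Suc)
  have p4: "phi Q a N (j-1) = cc Q M (j-1) * bb Q a (M+1-(j-1))" by (simp add: phi_def Suc)
  have ee: "N+1 = M+2" "N = M+1" "2*N+1 = 2*M+3" using Suc by simp_all
  have p5: "Q^(N+1) = Q^(M+2)" "Q^N = Q^(M+1)" "Q^(2*N+1) = Q^(2*M+3)"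
    by (simp only: ee(1), simp only: ee(2), simp only: ee(3))
  show ?thesis by (simp only: p1 p2 p3 p4 p5 G)
qed


lemma Phi_E1:
  assumes Q: "1 < Q"
  shows "Phi Q a (Suc N) t - Phi Q a (Suc N) (t/Q) = t * (1 - Q^N) * Phi Q a N t"
proof (cases N)
  case 0
  have "Phi Q a (Suc 0) s = bb Q a 1" for s by (simp add: Phi_def phi_def)
  then show ?thesis using 0 by simp
next
  case (Suc M)
  have "Phi Q a (Suc N) t - Phi Q a (Suc N) (t/Q) = (\<Sum>l\<le>Suc N. phi Q a (Suc N) l * (t^l - (t/Q)^l))"
    by (simp add: Phi_def sum_subtractf algebra_simps)
  also have "\<dots> = (\<Sum>i\<le>N. phi Q a (Suc N) (Suc i) * (t^(Suc i) - (t/Q)^(Suc i)))"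
    by (simp only: sum.atMost_Suc_shift) simp
  also have "\<dots> = (\<Sum>i\<le>N. t * (1 - Q^N) * (phi Q a N i * t^i))"
  proof (rule sum.cong[OF refl])
    fix i assume "i \<in> {..N}"
    define u where "u = Q ^ Suc i"
    have u0: "u \<noteq> 0" "1 - u \<noteq> 0" unfolding u_def using Q pow_ne1[OF Q, of "Suc i"] by auto
    have p1: "phi Q a (Suc N) (Suc i) = - u * (1 - Q^N) / (1 - u) * cc Q M i * bb Q a (N - i)"
      unfolding phi_def u_def using cc_Suc_Suc[OF Q, of M i] Suc by simp
    have p2: "phi Q a N i = cc Q M i * bb Q a (N - i)" unfolding phi_def using Suc by simp
    have p3: "(t/Q)^(Suc i) = t^(Suc i) / u" unfolding u_def by (simp add: power_divide)
    show "phi Q a (Suc N) (Suc i) * (t^(Suc i) - (t/Q)^(Suc i)) = t * (1 - Q^N) * (phi Q a N i * t^i)"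
      unfolding p1 p2 p3 using u0 by (simp add: field_simps)
  qed
  also have "\<dots> = t * (1 - Q^N) * Phi Q a N t" by (simp add: Phi_def sum_distrib_left)
  finally show ?thesis .
qed

lemma Phi_R:
  assumes Q: "1 < Q"
  shows "t * (1 - Q^(N+1)) * Phi Q a (N+1) t =
    (1 - Q^N*t) * (1 - Q^(N+1)*t) * Phi Q a N t - (1 - a*t + Q*t^2) * Phi Q a N (Q*t)"
proof -
  let ?f = "phi Q a N"
  have fz: "?f l = 0" if "N < l" for l using phi_zero that by blast
  define ca where "ca j = ?f (j+1) * (1 - Q^(j+1))" for j
  define cb where "cb j = ?f j * (a * Q^j - (Q^N + Q^(N+1)))" for j
  define ccc where "ccc j = (if j = 0 then 0 else ?f (j - 1) * (Q^(2*N+1) - Q^j))" for j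
  have "(1 - Q^N*t) * (1 - Q^(N+1)*t) * Phi Q a N t - (1 - a*t + Q*t^2) * Phi Q a N (Q*t) =
     (\<Sum>l\<le>N. ?f l * (1 - Q^l) * t^l + ?f l * (a * Q^l - (Q^N + Q^(N+1))) * t^(l+1) + ?f l * (Q^(2*N+1) - Q^(l+1)) * t^(l+2))"
  proof -
    have e: "Q^(2*N+1) = Q^N * Q^(N+1)"
    proof -
      have "2*N+1 = N + (N+1)" by simp
      then show ?thesis by (metis power_add)
    qed
    have "(1 - Q^N*t) * (1 - Q^(N+1)*t) * Phi Q a N t - (1 - a*t + Q*t^2) * Phi Q a N (Q*t) =
      (\<Sum>l\<le>N. (1 - Q^N*t) * (1 - Q^(N+1)*t) * (?f l * t^l) - (1 - a*t + Q*t^2) * (?f l * (Q^l * t^l)))"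
      by (simp add: Phi_def sum_distrib_left sum_subtractf power_mult_distrib)
    also have "\<dots> = (\<Sum>l\<le>N. ?f l * (1 - Q^l) * t^l + ?f l * (a * Q^l - (Q^N + Q^(N+1))) * t^(l+1) + ?f l * (Q^(2*N+1) - Q^(l+1)) * t^(l+2))"
      by (rule sum.cong[OF refl]) (simp only: e, simp add: algebra_simps power2_eq_square)
    finally show ?thesis .
  qed
  also have "\<dots> = (\<Sum>l\<le>N. ?f l * (1 - Q^l) * t^l) + (\<Sum>l\<le>N. ?f l * (a * Q^l - (Q^N + Q^(N+1))) * t^(l+1)) + (\<Sum>l\<le>N. ?f l * (Q^(2*N+1) - Q^(l+1)) * t^(l+2))"
    by (simp add: sum.distrib)
  also have "(\<Sum>l\<le>N. ?f l * (1 - Q^l) * t^l) = (\<Sum>j\<le>N+1. ca j * t^(j+1))"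
  proof -
    have "(\<Sum>l\<le>N. ?f l * (1 - Q^l) * t^l) = (\<Sum>l\<le>Suc (Suc N). ?f l * (1 - Q^l) * t^l)"
      by (simp add: fz)
    also have "\<dots> = (\<Sum>j\<le>Suc N. ?f (Suc j) * (1 - Q^(Suc j)) * t^(Suc j))"
      by (simp only: sum.atMost_Suc_shift) simp
    finally show ?thesis by (simp add: ca_def)
  qed
  also have "(\<Sum>l\<le>N. ?f l * (a * Q^l - (Q^N + Q^(N+1))) * t^(l+1)) = (\<Sum>j\<le>N+1. cb j * t^(j+1))"
    by (simp add: cb_def fz)
  also have "(\<Sum>l\<le>N. ?f l * (Q^(2*N+1) - Q^(l+1)) * t^(l+2)) = (\<Sum>j\<le>N+1. ccc j * t^(j+1))"
    by (simp add: ccc_def sum.atMost_Suc_shift del: sum.atMost_Suc)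
  also have "(\<Sum>j\<le>N+1. ca j * t^(j+1)) + (\<Sum>j\<le>N+1. cb j * t^(j+1)) + (\<Sum>j\<le>N+1. ccc j * t^(j+1)) =
     (\<Sum>j\<le>N+1. (ca j + cb j + ccc j) * t^(j+1))"
    by (simp add: sum.distrib algebra_simps)
  also have "\<dots> = (\<Sum>j\<le>N+1. t * (1 - Q^(N+1)) * (phi Q a (N+1) j * t^j))"
  proof (rule sum.cong[OF refl])
    fix j
    have H: "ca j + cb j + ccc j = (1 - Q ^ (N+1)) * phi Q a (N+1) j"
      unfolding ca_def cb_def ccc_def using coef_id[OF Q, of N a j] by simp
    show "(ca j + cb j + ccc j) * t^(j+1) = t * (1 - Q^(N+1)) * (phi Q a (N+1) j * t^j)"
      unfolding H by (simp add: algebra_simps)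
  qed
  also have "\<dots> = t * (1 - Q^(N+1)) * Phi Q a (N+1) t"
    unfolding Phi_def by (rule sum_distrib_left[symmetric])
  finally show ?thesis ..
qed

definition ww :: "real \<Rightarrow> real \<Rightarrow> nat list \<Rightarrow> real" where
  "ww Q a ks = (\<Prod>k\<leftarrow>ks. v_star Q a k) / (\<Prod>j<length ks - 1. (1 - Q ^ (ks ! j + ks ! (j + 1))))"

definition Dc :: "real \<Rightarrow> real \<Rightarrow> nat \<Rightarrow> real \<Rightarrow> real" where
  "Dc Q a n t = (\<Sum>ks\<in>compositions n. ww Q a ks * (if ks = [] then 1 else 1 / (1 - t * Q ^ hd ks)))"

lemma compositions_0: "compositions 0 = {[]}"
proof -
  have "ks = []" if "ks \<in> compositions 0" for ks
  proof (cases ks)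
    case (Cons x xs)
    then show ?thesis using that by (auto simp: compositions_def)
  qed simp
  then show ?thesis by (auto simp: compositions_def)
qed

lemma compositions_pos:
  assumes n: "0 < n"
  shows "compositions n = (\<Union>k\<in>{1..n}. (\<lambda>ks. k # ks) ` compositions (n - k))"
proof
  show "compositions n \<subseteq> (\<Union>k\<in>{1..n}. (\<lambda>ks. k # ks) ` compositions (n - k))"
  proof
    fix ks assume ks: "ks \<in> compositions n"
    show "ks \<in> (\<Union>k\<in>{1..n}. (\<lambda>ks. k # ks) ` compositions (n - k))"
    proof (cases ks)
      case Nil then show ?thesis using ks n by (simp add: compositions_def)
    next
      case (Cons k ks')
      have k: "0 < k" "k \<le> n" "ks' \<in> compositions (n - k)"
        using ks Cons by (auto simp: compositions_def)
      show ?thesis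
        by (rule UN_I[of k]) (use k Cons in auto)
    qed
  qed
  show "(\<Union>k\<in>{1..n}. (\<lambda>ks. k # ks) ` compositions (n - k)) \<subseteq> compositions n"
    by (auto simp: compositions_def)
qed

lemma finite_compositions: "finite (compositions n)"
proof (induction n rule: less_induct)
  case (less n)
  show ?case
  proof (cases "n = 0")
    case True then show ?thesis by (simp add: compositions_0)
  next
    case False
    then have "0 < n" by simp
    show ?thesis unfolding compositions_pos[OF \<open>0 < n\<close>]
      using less \<open>0 < n\<close> by auto
  qed
qed

lemma sum_compositions:
  assumes n: "0 < n"
  shows "(\<Sum>ks\<in>compositions n. g ks) = (\<Sum>k=1..n. \<Sum>ks\<in>compositions (n - k). g (k # ks))"
proof -
  have "(\<Sum>ks\<in>compositions n. g ks) = (\<Sum>k\<in>{1..n}. sum g ((\<lambda>ks. k # ks) ` compositions (n - k)))"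
    unfolding compositions_pos[OF n]
    by (rule sum.UNION_disjoint) (auto simp: finite_compositions)
  also have "\<dots> = (\<Sum>k=1..n. \<Sum>ks\<in>compositions (n - k). g (k # ks))"
    by (rule sum.cong[OF refl]) (simp add: sum.reindex inj_on_def)
  finally show ?thesis .
qed

lemma ww_Nil: "ww Q a [] = 1" by (simp add: ww_def)

lemma ww_Cons:
  "ww Q a (k # ks) = v_star Q a k * ww Q a ks * (if ks = [] then 1 else 1 / (1 - Q ^ (k + hd ks)))"
proof (cases ks)
  case Nil then show ?thesis by (simp add: ww_def)
next
  case (Cons h t)
  have D: "(\<Prod>j<length (k # ks) - 1. (1 - Q ^ ((k # ks) ! j + (k # ks) ! (j + 1)))) =
      (1 - Q ^ (k + h)) * (\<Prod>j<length ks - 1. (1 - Q ^ (ks ! j + ks ! (j + 1))))"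
    using Cons by (simp del: prod.lessThan_Suc add: prod.lessThan_Suc_shift)
  have h: "ks \<noteq> []" "hd ks = h" using Cons by simp_all
  have gen: "\<And>v p c d::real. (v * p) / (c * d) = v * (p / d) * (1 / c)"
    by (simp add: divide_inverse inverse_mult_distrib mult.assoc mult.left_commute mult.commute)
  have pl: "(\<Prod>k\<leftarrow>k # ks. v_star Q a k) = v_star Q a k * (\<Prod>k\<leftarrow>ks. v_star Q a k)" by simp
  show ?thesis unfolding ww_def D pl gen using h by simp
qed

lemma Dc_0: "Dc Q a 0 t = 1"
  by (simp add: Dc_def compositions_0 ww_Nil)

lemma Dc_rec:
  assumes n: "0 < n"
  shows "Dc Q a n t = (\<Sum>k=1..n. v_star Q a k * Dc Q a (n - k) (Q ^ k) / (1 - t * Q ^ k))"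
proof -
  have "Dc Q a n t = (\<Sum>k=1..n. \<Sum>ks\<in>compositions (n - k). ww Q a (k # ks) * (1 / (1 - t * Q ^ k)))"
    unfolding Dc_def sum_compositions[OF n] by simp
  also have "\<dots> = (\<Sum>k=1..n. v_star Q a k * Dc Q a (n - k) (Q ^ k) / (1 - t * Q ^ k))"
  proof (rule sum.cong[OF refl])
    fix k
    have "(\<Sum>ks\<in>compositions (n - k). ww Q a (k # ks) * (1 / (1 - t * Q ^ k))) =
      (\<Sum>ks\<in>compositions (n - k). v_star Q a k / (1 - t * Q ^ k) * (ww Q a ks * (if ks = [] then 1 else 1 / (1 - Q ^ k * Q ^ hd ks))))"
      by (rule sum.cong[OF refl]) (simp add: ww_Cons power_add)
    also have "\<dots> = v_star Q a k * Dc Q a (n - k) (Q ^ k) / (1 - t * Q ^ k)"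
      unfolding Dc_def sum_distrib_left[symmetric] by simp
    finally show "(\<Sum>ks\<in>compositions (n - k). ww Q a (k # ks) * (1 / (1 - t * Q ^ k))) =
      v_star Q a k * Dc Q a (n - k) (Q ^ k) / (1 - t * Q ^ k)" .
  qed
  finally show ?thesis .
qed

lemma beta_Dc: "beta_star Q a n = Dc Q a n 0"
  unfolding beta_star_def Dc_def ww_def by (rule sum.cong[OF refl]) simp

definition Del :: "real \<Rightarrow> nat \<Rightarrow> real \<Rightarrow> real" where
  "Del Q n t = (\<Prod>j=1..n. (1 - t * Q ^ j))"

lemma Del_0 [simp]: "Del Q 0 t = 1" by (simp add: Del_def)

lemma Del_Suc: "Del Q (Suc n) t = Del Q n t * (1 - t * Q ^ Suc n)"
  by (simp add: Del_def)

lemma Del_shift: "Del Q (Suc n) t = (1 - t * Q) * Del Q n (Q * t)"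
proof -
  have "Del Q (Suc n) t = (1 - t * Q ^ 1) * (\<Prod>j=Suc 1..Suc n. (1 - t * Q ^ j))"
    unfolding Del_def by (rule prod.atLeast_Suc_atMost) simp
  also have "(\<Prod>j=Suc 1..Suc n. (1 - t * Q ^ j)) = (\<Prod>j=1..n. (1 - t * Q ^ Suc j))"
    by (rule prod.shift_bounds_cl_Suc_ivl)
  also have "\<dots> = Del Q n (Q * t)" unfolding Del_def by (simp add: mult_ac)
  finally show ?thesis by simp
qed

lemma Del_nz_iff: "Del Q n t \<noteq> 0 \<longleftrightarrow> (\<forall>k\<in>{1..n}. 1 - t * Q ^ k \<noteq> 0)"
  unfolding Del_def by simp

lemma Del_pow_nz:
  assumes Q: "1 < Q"
  shows "Del Q n (Q ^ k) \<noteq> 0"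
  unfolding Del_nz_iff
proof
  fix j assume "j \<in> {1..n}"
  then have "0 < k + j" by simp
  then have "1 - Q ^ (k + j) \<noteq> 0" by (rule pow_ne1[OF Q])
  then show "1 - Q ^ k * Q ^ j \<noteq> 0" by (simp add: power_add)
qed

lemma Phi_0: "Phi Q a 0 t = 1"
  by (simp add: Phi_def phi_def)

lemma E1D:
  assumes Q: "1 < Q" and k: "1 \<le> k"
    and Cm: "\<And>s. s \<noteq> 0 \<Longrightarrow> Del Q m s \<noteq> 0 \<Longrightarrow> Dc Q a m s = Phi Q a m s / Del Q m s"
    and Cm1: "\<And>s. s \<noteq> 0 \<Longrightarrow> Del Q (m - 1) s \<noteq> 0 \<Longrightarrow> Dc Q a (m - 1) s = Phi Q a (m - 1) s / Del Q (m - 1) s"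
  shows "(1 - Q ^ (m + k)) * Dc Q a m (Q ^ k) =
    (1 - Q ^ k) * Dc Q a m (Q ^ (k - 1)) + Q ^ k * (1 - Q ^ (m - 1)) * Dc Q a (m - 1) (Q ^ k)"
proof (cases m)
  case 0
  then show ?thesis by (simp add: Dc_0)
next
  case (Suc m')
  define s where "s = Q ^ k"
  have Q0: "Q \<noteq> 0" using Q by simp
  have s0: "s \<noteq> 0" using Q unfolding s_def by simp
  have s1: "1 - s \<noteq> 0" unfolding s_def using pow_ne1[OF Q, of k] k by simp
  have sQ: "s / Q = Q ^ (k - 1)"
  proof -
    obtain k' where k': "k = Suc k'" using k by (cases k) auto
    show ?thesis unfolding s_def k' using Q0 by simp
  qed
  have sQ0: "s / Q \<noteq> 0" using s0 Q0 by simp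
  have D1: "Del Q m' s \<noteq> 0" unfolding s_def by (rule Del_pow_nz[OF Q])
  have D2: "Del Q (Suc m') s \<noteq> 0" unfolding s_def by (rule Del_pow_nz[OF Q])
  have D2e: "Del Q (Suc m') s = Del Q m' s * (1 - s * Q ^ Suc m')" by (rule Del_Suc)
  have D3e: "Del Q (Suc m') (s / Q) = (1 - s) * Del Q m' s"
    using Del_shift[of Q m' "s/Q"] Q0 by simp
  have D3: "Del Q (Suc m') (s / Q) \<noteq> 0" using D3e s1 D1 by simp
  have f1: "Dc Q a m s = Phi Q a (Suc m') s / Del Q (Suc m') s" using Cm[OF s0] D2 Suc by simp
  have f2: "Dc Q a m (s / Q) = Phi Q a (Suc m') (s / Q) / Del Q (Suc m') (s / Q)" using Cm[OF sQ0] D3 Suc by simp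
  have f3: "Dc Q a (m - 1) s = Phi Q a m' s / Del Q m' s" using Cm1[OF s0] D1 Suc by simp
  have E: "Phi Q a (Suc m') s - Phi Q a (Suc m') (s/Q) = s * (1 - Q^m') * Phi Q a m' s"
    by (rule Phi_E1[OF Q])
  have pm: "Q ^ (m + k) = s * Q ^ Suc m'" unfolding s_def Suc by (simp add: power_add mult_ac)
  have e1: "(1 - Q ^ (m + k)) * Dc Q a m s = Phi Q a (Suc m') s / Del Q m' s"
    unfolding f1 pm D2e using D1 D2 D2e by (simp add: field_simps)
  have e2: "(1 - s) * Dc Q a m (s / Q) = Phi Q a (Suc m') (s/Q) / Del Q m' s"
    unfolding f2 D3e using D1 s1 by (simp add: field_simps)
  have e3: "s * (1 - Q ^ (m - 1)) * Dc Q a (m - 1) s = s * (1 - Q^m') * Phi Q a m' s / Del Q m' s"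
    unfolding f3 using Suc by simp
  have "(1 - Q ^ (m + k)) * Dc Q a m s - (1 - s) * Dc Q a m (s / Q) = (Phi Q a (Suc m') s - Phi Q a (Suc m') (s/Q)) / Del Q m' s"
    unfolding e1 e2 by (simp add: diff_divide_distrib)
  also have "\<dots> = s * (1 - Q ^ (m - 1)) * Dc Q a (m - 1) s" unfolding E e3 ..
  finally have "(1 - Q ^ (m + k)) * Dc Q a m s = (1 - s) * Dc Q a m (s / Q) + s * (1 - Q ^ (m - 1)) * Dc Q a (m - 1) s"
    by simp
  then have "(1 - Q ^ (m + k)) * Dc Q a m s = (1 - s) * Dc Q a m (Q ^ (k - 1)) + s * (1 - Q ^ (m - 1)) * Dc Q a (m - 1) s"
    unfolding sQ .
  then show ?thesis unfolding s_def .
qed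


lemma hj_alg:
  fixes Q a t u w z r d1 d2 d3 d4 :: real
  assumes e1: "d1 = 1 - t*Q" and e2: "d2 = 1 - u" and e3: "d3 = 1 - t*u" and e4: "d4 = 1 - t*(Q*u)"
    and n1: "d1 \<noteq> 0" and n2: "d2 \<noteq> 0" and n3: "d3 \<noteq> 0" and n4: "d4 \<noteq> 0"
    and r: "r*(Q-1) = Q+1-a" and z: "z*(1-Q*u)*d2 = Q*u^2 - a*u + 1"
  shows "t*r*(1-Q)/(d1*d2) + t*z*(1-Q*u)/d4 + t*u*(1-w)/d3 = (1 - (u*w)*t)/d3 - (1 - a*t + Q*t^2)/(d1*d4)"
    (is "?L = ?R")
proof -
  have L: "?L * (d1*d2*d3*d4) = t*r*(1-Q)*d3*d4 + t*z*(1-Q*u)*d1*d2*d3 + t*u*(1-w)*d1*d2*d4"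
    using n1 n2 n3 n4 by (simp add: field_simps)
  have R: "?R * (d1*d2*d3*d4) = (1-(u*w)*t)*d1*d2*d4 - (1-a*t+Q*t^2)*d2*d3"
    using n1 n2 n3 n4 by (simp add: field_simps)
  have P: "t*r*(1-Q)*d3*d4 + t*z*(1-Q*u)*d1*d2*d3 + t*u*(1-w)*d1*d2*d4 = (1-(u*w)*t)*d1*d2*d4 - (1-a*t+Q*t^2)*d2*d3"
    using e1 e2 e3 e4 r z by algebra
  have E: "?L * (d1*d2*d3*d4) = ?R * (d1*d2*d3*d4)" using L R P by simp
  have nz: "d1*d2*d3*d4 \<noteq> 0" using n1 n2 n3 n4 by simp
  show ?thesis using E mult_right_cancel[OF nz] by blast
qed


lemma zeta_rel:
  fixes Q a u :: real
  assumes Q0: "Q \<noteq> 0" and u0: "u \<noteq> 0" and n1: "1 - u \<noteq> 0" and n2: "1 - Q*u \<noteq> 0"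
  shows "zeta_star_T Q a (1/(Q*u)) * (1 - Q*u) * (1 - u) = Q*u^2 - a*u + 1"
proof -
  define B where "B = Q*u - 1"
  define C where "C = u - 1"
  define A where "A = Q*u^2 - a*u + 1"
  have B0: "B \<noteq> 0" and C0: "C \<noteq> 0" unfolding B_def C_def using n1 n2 by auto
  have a1: "1 - 1/(Q*u) = B/(Q*u)" unfolding B_def using Q0 u0 by (simp add: field_simps)
  have a2: "1 - Q * (1/(Q*u)) = C/u" unfolding C_def using Q0 u0 by (simp add: field_simps)
  have a3: "1 - a * (1/(Q*u)) + Q * (1/(Q*u))^2 = A/(Q*u^2)"
    unfolding A_def using Q0 u0 by (simp add: field_simps power2_eq_square)
  have b1: "1 - Q*u = - B" "1 - u = - C" unfolding B_def C_def by simp_all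
  have "zeta_star_T Q a (1/(Q*u)) * (1 - Q*u) * (1 - u) = (A/(Q*u^2)) / ((B/(Q*u)) * (C/u)) * (- B) * (- C)"
    unfolding zeta_star_T_def a1 a2 a3 b1 ..
  also have "\<dots> = A" using Q0 u0 B0 C0 by (simp add: field_simps power2_eq_square)
  finally show ?thesis unfolding A_def .
qed

lemma hlp0: "(t::real) * c * (v * D / d) = t * v / d * (c * D)"
  by (simp add: divide_inverse mult_ac)
lemma hlp1: "(t::real) * r / d1 * (c * (A / d2)) = A * (t * r * c / (d1 * d2))"
  by (simp add: divide_inverse inverse_mult_distrib mult_ac)
lemma hlp2: "(t::real) * (vj * zj) / d * (c * D) = (vj * D) * (t * zj * c / d)"
  by (simp add: divide_inverse mult_ac)
lemma hlp3: "(t::real) * vj / d * (u * c * D) = (vj * D) * (t * u * c / d)"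
  by (simp add: divide_inverse mult_ac)
lemma hlp4: "(x::real) * (A / d) - P * (A / d') / e = A * (x / d - P / (e * d'))"
  by (simp add: divide_inverse inverse_mult_distrib algebra_simps)

lemma R2:
  assumes Q: "1 < Q" and N: "1 \<le> N"
    and E: "\<And>k. k \<in> {1..Suc N} \<Longrightarrow> (1 - Q^(Suc N)) * Dc Q a (Suc N - k) (Q^k) =
       (1 - Q^k) * Dc Q a (Suc N - k) (Q^(k-1)) + Q^k * (1 - Q^(Suc N - k - 1)) * Dc Q a (Suc N - k - 1) (Q^k)"
    and nz: "\<And>k. k \<in> {1..Suc N} \<Longrightarrow> 1 - t * Q^k \<noteq> 0"
  shows "t * (1 - Q^(Suc N)) * Dc Q a (Suc N) t =
    (1 - Q^N * t) * Dc Q a N t - (1 - a*t + Q*t^2) * Dc Q a N (Q*t) / (1 - Q*t)"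
proof -
  define v where "v = v_star Q a"
  define A where "A j = v j * Dc Q a (N - j) (Q^j)" for j
  define r where "r = (Q+1-a)/(Q-1)"
  define z where "z j = zeta_star_T Q a (1/(Q*Q^j))" for j
  have Q0: "Q \<noteq> 0" and Q1: "Q - 1 \<noteq> 0" using Q by auto
  have v1: "v 1 = r" by (simp add: v_def r_def v_star_def zeta_star_val_def)
  have vS: "v (Suc j) = v j * z j" if "1 \<le> j" for j
    using that by (simp add: v_def v_star_def zeta_star_val_def z_def)
  have nzQ: "1 - t*Q \<noteq> 0" using nz[of 1] by simp
  have nzj: "1 - t*Q^j \<noteq> 0" "1 - t*(Q*Q^j) \<noteq> 0" "1 - Q^j \<noteq> 0" "1 - Q*Q^j \<noteq> 0" "Q^j \<noteq> 0"
    if "j \<in> {1..N}" for j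
  proof -
    show "1 - t*Q^j \<noteq> 0" using nz[of j] that by simp
    show "1 - t*(Q*Q^j) \<noteq> 0" using nz[of "Suc j"] that by simp
    show "1 - Q^j \<noteq> 0" using pow_ne1[OF Q, of j] that by simp
    show "1 - Q*Q^j \<noteq> 0" using pow_ne1[OF Q, of "Suc j"] by simp
    show "Q^j \<noteq> 0" using Q0 by simp
  qed
  have S0: "t * (1 - Q^(Suc N)) * Dc Q a (Suc N) t =
    (\<Sum>k=1..Suc N. t * v k / (1 - t*Q^k) * ((1 - Q^(Suc N)) * Dc Q a (Suc N - k) (Q^k)))"
    unfolding Dc_rec[of "Suc N" Q a t, OF zero_less_Suc] sum_distrib_left
    by (rule sum.cong[OF refl]) (simp only: v_def hlp0)
  also have "\<dots> = (\<Sum>k=1..Suc N. t * v k / (1 - t*Q^k) * ((1 - Q^k) * Dc Q a (Suc N - k) (Q^(k-1))))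
      + (\<Sum>k=1..Suc N. t * v k / (1 - t*Q^k) * (Q^k * (1 - Q^(Suc N - k - 1)) * Dc Q a (Suc N - k - 1) (Q^k)))"
    unfolding sum.distrib[symmetric]
  proof (rule sum.cong[OF refl])
    fix k assume k: "k \<in> {1..Suc N}"
    show "t * v k / (1 - t*Q^k) * ((1 - Q^(Suc N)) * Dc Q a (Suc N - k) (Q^k)) =
      t * v k / (1 - t*Q^k) * ((1 - Q^k) * Dc Q a (Suc N - k) (Q^(k-1))) +
      t * v k / (1 - t*Q^k) * (Q^k * (1 - Q^(Suc N - k - 1)) * Dc Q a (Suc N - k - 1) (Q^k))"
      unfolding E[OF k] by (rule distrib_left)
  qed
  also have "(\<Sum>k=1..Suc N. t * v k / (1 - t*Q^k) * ((1 - Q^k) * Dc Q a (Suc N - k) (Q^(k-1)))) =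
      t * r / (1 - t*Q) * ((1 - Q) * Dc Q a N 1)
      + (\<Sum>j=1..N. t * v (Suc j) / (1 - t*Q^(Suc j)) * ((1 - Q^(Suc j)) * Dc Q a (N - j) (Q^j)))"
  proof -
    let ?f = "\<lambda>k. t * v k / (1 - t*Q^k) * ((1 - Q^k) * Dc Q a (Suc N - k) (Q^(k-1)))"
    have "(\<Sum>k=1..Suc N. ?f k) = ?f 1 + (\<Sum>k=Suc 1..Suc N. ?f k)"
      by (rule sum.atLeast_Suc_atMost) simp
    also have "(\<Sum>k=Suc 1..Suc N. ?f k) = (\<Sum>j=1..N. ?f (Suc j))"
      by (rule sum.shift_bounds_cl_Suc_ivl)
    also have "?f 1 = t * r / (1 - t*Q) * ((1 - Q) * Dc Q a N 1)" using v1 by simp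
    also have "(\<Sum>j=1..N. ?f (Suc j)) = (\<Sum>j=1..N. t * v (Suc j) / (1 - t*Q^(Suc j)) * ((1 - Q^(Suc j)) * Dc Q a (N - j) (Q^j)))"
      by simp
    finally show ?thesis .
  qed
  also have "(\<Sum>k=1..Suc N. t * v k / (1 - t*Q^k) * (Q^k * (1 - Q^(Suc N - k - 1)) * Dc Q a (Suc N - k - 1) (Q^k))) =
      (\<Sum>j=1..N. t * v j / (1 - t*Q^j) * (Q^j * (1 - Q^(N - j)) * Dc Q a (N - j) (Q^j)))"
  proof -
    let ?g = "\<lambda>k. t * v k / (1 - t*Q^k) * (Q^k * (1 - Q^(Suc N - k - 1)) * Dc Q a (Suc N - k - 1) (Q^k))"
    have "(\<Sum>k=1..Suc N. ?g k) = (\<Sum>k=1..N. ?g k) + ?g (Suc N)"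
      by (rule sum.cl_ivl_Suc[THEN trans]) simp
    also have "?g (Suc N) = 0" by simp
    also have "(\<Sum>k=1..N. ?g k) = (\<Sum>j=1..N. t * v j / (1 - t*Q^j) * (Q^j * (1 - Q^(N - j)) * Dc Q a (N - j) (Q^j)))"
      by (rule sum.cong[OF refl]) simp
    finally show ?thesis by simp
  qed
  also have "t * r / (1 - t*Q) * ((1 - Q) * Dc Q a N 1) = (\<Sum>j=1..N. A j * (t*r*(1-Q)/((1 - t*Q)*(1 - Q^j))))"
  proof -
    have "Dc Q a N 1 = (\<Sum>j=1..N. A j / (1 - Q^j))"
      using Dc_rec[of N Q a 1] N by (simp add: A_def v_def)
    then show ?thesis by (simp only: sum_distrib_left hlp1)
  qed
  also have "(\<Sum>j=1..N. t * v (Suc j) / (1 - t*Q^(Suc j)) * ((1 - Q^(Suc j)) * Dc Q a (N - j) (Q^j))) =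
      (\<Sum>j=1..N. A j * (t*z j*(1 - Q*Q^j)/(1 - t*(Q*Q^j))))"
  proof (rule sum.cong[OF refl])
    fix j assume j: "j \<in> {1..N}"
    have "t * v (Suc j) / (1 - t*Q^(Suc j)) * ((1 - Q^(Suc j)) * Dc Q a (N - j) (Q^j)) =
      t * (v j * z j) / (1 - t*(Q*Q^j)) * ((1 - Q*Q^j) * Dc Q a (N - j) (Q^j))"
      using vS[of j] j by simp
    also have "\<dots> = A j * (t*z j*(1 - Q*Q^j)/(1 - t*(Q*Q^j)))" unfolding A_def by (rule hlp2)
    finally show "t * v (Suc j) / (1 - t*Q^(Suc j)) * ((1 - Q^(Suc j)) * Dc Q a (N - j) (Q^j)) =
      A j * (t*z j*(1 - Q*Q^j)/(1 - t*(Q*Q^j)))" .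
  qed
  also have "(\<Sum>j=1..N. t * v j / (1 - t*Q^j) * (Q^j * (1 - Q^(N - j)) * Dc Q a (N - j) (Q^j))) =
      (\<Sum>j=1..N. A j * (t*Q^j*(1 - Q^(N-j))/(1 - t*Q^j)))"
    unfolding A_def by (rule sum.cong[OF refl]) (rule hlp3)
  finally have LHS: "t * (1 - Q^(Suc N)) * Dc Q a (Suc N) t =
     (\<Sum>j=1..N. A j * (t*r*(1-Q)/((1 - t*Q)*(1 - Q^j)) + t*z j*(1 - Q*Q^j)/(1 - t*(Q*Q^j)) + t*Q^j*(1 - Q^(N-j))/(1 - t*Q^j)))"
    by (simp add: sum.distrib distrib_left)
  have RHS: "(1 - Q^N * t) * Dc Q a N t - (1 - a*t + Q*t^2) * Dc Q a N (Q*t) / (1 - Q*t) =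
     (\<Sum>j=1..N. A j * ((1 - (Q^j * Q^(N-j))*t)/(1 - t*Q^j) - (1 - a*t + Q*t^2)/((1 - t*Q)*(1 - t*(Q*Q^j)))))"
  proof -
    have d1: "Dc Q a N t = (\<Sum>j=1..N. A j / (1 - t*Q^j))"
      using Dc_rec[of N Q a t] N by (simp add: A_def v_def)
    have d2: "Dc Q a N (Q*t) = (\<Sum>j=1..N. A j / (1 - t*(Q*Q^j)))"
      using Dc_rec[of N Q a "Q*t"] N by (simp add: A_def v_def mult_ac)
    have pw: "Q^j * Q^(N-j) = Q^N" if "j \<in> {1..N}" for j
      using that by (simp add: power_add[symmetric])
    show ?thesis unfolding d1 d2 sum_distrib_left sum_divide_distrib sum_subtractf[symmetric]
    proof (rule sum.cong[OF refl])
      fix j assume j: "j \<in> {1..N}"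
      show "(1 - Q^N * t) * (A j / (1 - t*Q^j)) - (1 - a*t + Q*t^2) * (A j / (1 - t*(Q*Q^j))) / (1 - Q*t) =
        A j * ((1 - (Q^j * Q^(N-j))*t)/(1 - t*Q^j) - (1 - a*t + Q*t^2)/((1 - t*Q)*(1 - t*(Q*Q^j))))"
        unfolding pw[OF j] hlp4 by (simp add: mult.commute)
    qed
  qed
  show ?thesis unfolding LHS RHS
  proof (rule sum.cong[OF refl])
    fix j assume j: "j \<in> {1..N}"
    have "t*r*(1-Q)/((1 - t*Q)*(1 - Q^j)) + t*z j*(1 - Q*Q^j)/(1 - t*(Q*Q^j)) + t*Q^j*(1 - Q^(N-j))/(1 - t*Q^j) =
      (1 - (Q^j * Q^(N-j))*t)/(1 - t*Q^j) - (1 - a*t + Q*t^2)/((1 - t*Q)*(1 - t*(Q*Q^j)))"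
    proof (rule hj_alg)
      show "1 - t*Q \<noteq> 0" by (rule nzQ)
      show "1 - Q^j \<noteq> 0" "1 - t*Q^j \<noteq> 0" "1 - t*(Q*Q^j) \<noteq> 0" using nzj[OF j] by auto
      show "r * (Q - 1) = Q + 1 - a" unfolding r_def using Q1 by simp
      show "z j * (1 - Q*Q^j) * (1 - Q^j) = Q*(Q^j)^2 - a*Q^j + 1"
        unfolding z_def by (rule zeta_rel) (use nzj[OF j] Q0 in auto)
    qed simp_all
    then show "A j * (t*r*(1-Q)/((1 - t*Q)*(1 - Q^j)) + t*z j*(1 - Q*Q^j)/(1 - t*(Q*Q^j)) + t*Q^j*(1 - Q^(N-j))/(1 - t*Q^j)) =
      A j * ((1 - (Q^j * Q^(N-j))*t)/(1 - t*Q^j) - (1 - a*t + Q*t^2)/((1 - t*Q)*(1 - t*(Q*Q^j))))"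
      by simp
  qed
qed


lemma final_alg:
  fixes X c q1 q2 p1 p2 PPx D1 D2 Dn Pn s :: real
  assumes h1: "c * X = (1 - q1) * (p1 / D1) - PPx * (p2 / D2) / (1 - s)"
    and h2: "c * Pn = (1 - q1) * (1 - q2) * p1 - PPx * p2"
    and h3: "Dn = D1 * (1 - q2)" and h4: "Dn = (1 - s) * D2"
    and n: "c \<noteq> 0" "D1 \<noteq> 0" "D2 \<noteq> 0" "1 - s \<noteq> 0" "1 - q2 \<noteq> 0"
  shows "X = Pn / Dn"
proof -
  have Dn0: "Dn \<noteq> 0" using h3 n by simp
  have "c * X * Dn = (1 - q1) * (1 - q2) * p1 - PPx * p2"
  proof -
    have "c * X * Dn = ((1 - q1) * (p1 / D1)) * Dn - (PPx * (p2 / D2) / (1 - s)) * Dn"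
      unfolding h1 by (simp add: algebra_simps)
    also have "((1 - q1) * (p1 / D1)) * Dn = (1 - q1) * (1 - q2) * p1"
      unfolding h3 using n by (simp add: field_simps)
    also have "(PPx * (p2 / D2) / (1 - s)) * Dn = PPx * p2"
      unfolding h4 using n by (simp add: field_simps)
    finally show ?thesis .
  qed
  then have "c * X * Dn = c * Pn" using h2 by simp
  then have "X * Dn = Pn" using n(1) by (simp add: mult.assoc)
  then show ?thesis using Dn0 by (simp add: field_simps)
qed

lemma n1_alg:
  fixes t Q a d e :: real
  assumes e1: "d = 1 - t*Q" and e2: "e = Q - 1" and n1: "d \<noteq> 0" and n2: "e \<noteq> 0"
  shows "t*(1-Q)*((Q+1-a)/e/d) = (1 - t) - (1 - a*t + Q*t^2)/d" (is "?L = ?R")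
proof -
  have L: "?L * (d*e) = t*(1-Q)*(Q+1-a)" using n1 n2 by (simp add: field_simps)
  have R: "?R * (d*e) = ((1-t)*d - (1 - a*t + Q*t^2))*e" using n1 n2 by (simp add: field_simps)
  have P: "t*(1-Q)*(Q+1-a) = ((1-t)*d - (1 - a*t + Q*t^2))*e" using e1 e2 by algebra
  have nz: "d*e \<noteq> 0" using n1 n2 by simp
  show ?thesis using L R P mult_right_cancel[OF nz] by metis
qed

lemma Cn:
  assumes Q: "1 < Q"
  shows "t \<noteq> 0 \<Longrightarrow> Del Q n t \<noteq> 0 \<Longrightarrow> Dc Q a n t = Phi Q a n t / Del Q n t"
proof (induction n arbitrary: t rule: less_induct)
  case (less n)
  show ?case
  proof (cases n)
    case 0 then show ?thesis by (simp add: Dc_0 Phi_0)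
  next
    case (Suc N)
    have Q0: "Q \<noteq> 0" and Q1: "Q - 1 \<noteq> 0" using Q by auto
    have IH: "\<And>m s. m < n \<Longrightarrow> s \<noteq> 0 \<Longrightarrow> Del Q m s \<noteq> 0 \<Longrightarrow> Dc Q a m s = Phi Q a m s / Del Q m s"
      using less.IH by blast
    have t0: "t \<noteq> 0" using less.prems(1) .
    have nz: "\<And>k. k \<in> {1..Suc N} \<Longrightarrow> 1 - t*Q^k \<noteq> 0" using less.prems(2) Suc Del_nz_iff by blast
    have R: "t * (1 - Q^(Suc N)) * Dc Q a (Suc N) t =
      (1 - Q^N * t) * Dc Q a N t - (1 - a*t + Q*t^2) * Dc Q a N (Q*t) / (1 - Q*t)"
    proof (cases N)
      case 0
      have nq: "1 - t * Q \<noteq> 0" using nz[of 1] by simp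
      have d1: "Dc Q a 1 t = (Q + 1 - a) / (Q - 1) / (1 - t * Q)"
        using Dc_rec[of 1 Q a t] by (simp add: Dc_0 v_star_def zeta_star_val_def)
      have "t * (1 - Q) * ((Q + 1 - a) / (Q - 1) / (1 - t * Q)) = (1 - t) - (1 - a*t + Q*t^2) / (1 - t * Q)"
        by (rule n1_alg) (use nq Q1 in auto)
      then show ?thesis unfolding 0 using d1 by (simp add: Dc_0 mult.commute)
    next
      case (Suc N')
      show ?thesis
      proof (rule R2[OF Q])
        show "1 \<le> N" using Suc by simp
        show "1 - t * Q ^ k \<noteq> 0" if "k \<in> {1..Suc N}" for k using nz that by blast
        fix k assume k: "k \<in> {1..Suc N}"
        have m: "Suc N - k + k = Suc N" using k by simp
        have "(1 - Q ^ (Suc N - k + k)) * Dc Q a (Suc N - k) (Q ^ k) =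
          (1 - Q ^ k) * Dc Q a (Suc N - k) (Q ^ (k - 1)) + Q ^ k * (1 - Q ^ (Suc N - k - 1)) * Dc Q a (Suc N - k - 1) (Q ^ k)"
        proof (rule E1D[OF Q])
          show "1 \<le> k" using k by simp
          show "Dc Q a (Suc N - k) s = Phi Q a (Suc N - k) s / Del Q (Suc N - k) s"
            if "s \<noteq> 0" "Del Q (Suc N - k) s \<noteq> 0" for s
            using IH[of "Suc N - k" s] that k \<open>n = Suc N\<close> by simp
          show "Dc Q a (Suc N - k - 1) s = Phi Q a (Suc N - k - 1) s / Del Q (Suc N - k - 1) s"
            if "s \<noteq> 0" "Del Q (Suc N - k - 1) s \<noteq> 0" for s
            using IH[of "Suc N - k - 1" s] that k \<open>n = Suc N\<close> by simp
        qed
        then show "(1 - Q ^ Suc N) * Dc Q a (Suc N - k) (Q ^ k) =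
          (1 - Q ^ k) * Dc Q a (Suc N - k) (Q ^ (k - 1)) + Q ^ k * (1 - Q ^ (Suc N - k - 1)) * Dc Q a (Suc N - k - 1) (Q ^ k)"
          unfolding m .
      qed
    qed
    have De1: "Del Q (Suc N) t = Del Q N t * (1 - Q^(N+1) * t)" using Del_Suc[of Q N t] by (simp add: mult_ac)
    have De2: "Del Q (Suc N) t = (1 - Q * t) * Del Q N (Q * t)" using Del_shift[of Q N t] by (simp add: mult_ac)
    have Dn0: "Del Q (Suc N) t \<noteq> 0" using less.prems(2) Suc by simp
    have D10: "Del Q N t \<noteq> 0" using Dn0 De1 by auto
    have D20: "Del Q N (Q * t) \<noteq> 0" and s0: "1 - Q * t \<noteq> 0" using Dn0 De2 by auto
    have q20: "1 - Q^(N+1) * t \<noteq> 0" using Dn0 De1 by auto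
    have c0: "t * (1 - Q^(Suc N)) \<noteq> 0" using t0 pow_ne1[OF Q, of "Suc N"] by simp
    have f1: "Dc Q a N t = Phi Q a N t / Del Q N t" using IH[of N t] Suc t0 D10 by simp
    have f2: "Dc Q a N (Q*t) = Phi Q a N (Q*t) / Del Q N (Q*t)" using IH[of N "Q*t"] Suc t0 Q0 D20 by simp
    have PR: "t * (1 - Q^(N+1)) * Phi Q a (N+1) t =
      (1 - Q^N*t) * (1 - Q^(N+1)*t) * Phi Q a N t - (1 - a*t + Q*t^2) * Phi Q a N (Q*t)"
      by (rule Phi_R[OF Q])
    have "Dc Q a (Suc N) t = Phi Q a (Suc N) t / Del Q (Suc N) t"
    proof (rule final_alg)
      show "(t * (1 - Q^(Suc N))) * Dc Q a (Suc N) t =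
        (1 - Q^N * t) * (Phi Q a N t / Del Q N t) - (1 - a*t + Q*t^2) * (Phi Q a N (Q*t) / Del Q N (Q*t)) / (1 - Q*t)"
        using R unfolding f1 f2 .
      show "(t * (1 - Q^(Suc N))) * Phi Q a (Suc N) t =
        (1 - Q^N*t) * (1 - Q^(N+1)*t) * Phi Q a N t - (1 - a*t + Q*t^2) * Phi Q a N (Q*t)"
        using PR by simp
    qed (use De1 De2 c0 D10 D20 s0 q20 in auto)
    then show ?thesis using Suc by simp
  qed
qed


lemma Phi_at0: "Phi Q a n 0 = bb Q a n"
proof -
  have "Phi Q a n 0 = (\<Sum>l\<in>{..n}. if l = 0 then phi Q a n 0 else 0)"
    unfolding Phi_def by (rule sum.cong[OF refl]) auto
  also have "\<dots> = phi Q a n 0" by (simp add: sum.delta)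
  finally show ?thesis by (simp add: phi_def)
qed

lemma beta_bb:
  assumes Q: "1 < Q"
  shows "beta_star Q a n = bb Q a n"
proof -
  have Q0: "0 < Q" using Q by simp
  have c1: "isCont (Dc Q a n) 0"
  proof -
    have "isCont (\<lambda>t. ww Q a ks * (if ks = [] then 1 else 1 / (1 - t * Q ^ hd ks))) 0" for ks
    proof (cases "ks = []")
      case True then show ?thesis by simp
    next
      case False then show ?thesis by simp
    qed
    then show ?thesis unfolding Dc_def by (intro isCont_sum) auto
  qed
  have c2: "isCont (\<lambda>t. Phi Q a n t / Del Q n t) 0"
    unfolding Phi_def Del_def by (intro continuous_intros) simp
  have ev: "\<forall>\<^sub>F t in at 0. Dc Q a n t = Phi Q a n t / Del Q n t"
  proof -
    have H: "\<forall>t. t \<noteq> 0 \<and> dist t 0 < 1 / Q ^ n \<longrightarrow> Dc Q a n t = Phi Q a n t / Del Q n t"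
    proof (intro allI impI)
      fix t :: real assume t: "t \<noteq> 0 \<and> dist t 0 < 1 / Q ^ n"
      have "Del Q n t \<noteq> 0" unfolding Del_nz_iff
      proof
        fix k assume k: "k \<in> {1..n}"
        have "Q ^ k \<le> Q ^ n" using k Q by (intro power_increasing) auto
        have "\<bar>t * Q ^ k\<bar> = \<bar>t\<bar> * Q ^ k" using Q0 by (simp add: abs_mult)
        also have "\<dots> < (1 / Q ^ n) * Q ^ k"
          using t Q0 by (intro mult_strict_right_mono) (auto simp: dist_real_def)
        also have "\<dots> \<le> 1" using \<open>Q ^ k \<le> Q ^ n\<close> Q0 by (simp add: field_simps)
        finally show "1 - t * Q ^ k \<noteq> 0" by auto
      qed
      then show "Dc Q a n t = Phi Q a n t / Del Q n t" using Cn[OF Q] t by blast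
    qed
    show ?thesis unfolding eventually_at using Q0 H by (intro exI[of _ "1 / Q ^ n"]) auto
  qed
  have l1: "(Dc Q a n \<longlongrightarrow> Dc Q a n 0) (at 0)" using c1 by (simp add: isCont_def)
  have l2: "((\<lambda>t. Phi Q a n t / Del Q n t) \<longlongrightarrow> Phi Q a n 0 / Del Q n 0) (at 0)"
    using c2 by (simp add: isCont_def)
  have l3: "(Dc Q a n \<longlongrightarrow> Phi Q a n 0 / Del Q n 0) (at 0)"
    by (rule Lim_transform_eventually[OF l2]) (use ev in \<open>simp add: eq_commute\<close>)
  have "Dc Q a n 0 = Phi Q a n 0 / Del Q n 0" using LIM_unique[OF l1 l3] .
  then show ?thesis by (simp add: beta_Dc Phi_at0 Del_def)
qed

definition fscale :: "real \<Rightarrow> real fps \<Rightarrow> real fps" where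
  "fscale c f = Abs_fps (\<lambda>n. c ^ n * fps_nth f n)"

lemma fscale_nth [simp]: "fps_nth (fscale c f) n = c ^ n * fps_nth f n"
  by (simp add: fscale_def)

lemma fscale_mult: "fscale c (f * g) = fscale c f * fscale c g"
proof (rule fps_ext)
  fix n
  have "fps_nth (fscale c (f * g)) n = (\<Sum>i=0..n. c ^ n * (fps_nth f i * fps_nth g (n - i)))"
    by (simp add: fps_mult_nth sum_distrib_left)
  also have "\<dots> = (\<Sum>i=0..n. (c ^ i * fps_nth f i) * (c ^ (n - i) * fps_nth g (n - i)))"
  proof (rule sum.cong[OF refl])
    fix i assume "i \<in> {0..n}"
    then have "c ^ n = c ^ i * c ^ (n - i)" by (simp add: power_add[symmetric])
    then show "c ^ n * (fps_nth f i * fps_nth g (n - i)) = (c ^ i * fps_nth f i) * (c ^ (n - i) * fps_nth g (n - i))"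
      by (simp add: mult_ac)
  qed
  also have "\<dots> = fps_nth (fscale c f * fscale c g) n" by (simp add: fps_mult_nth)
  finally show "fps_nth (fscale c (f * g)) n = fps_nth (fscale c f * fscale c g) n" .
qed

lemma fscale_one [simp]: "fscale c 1 = 1"
  by (rule fps_ext) simp

definition ff :: "real \<Rightarrow> real \<Rightarrow> nat \<Rightarrow> real fps" where
  "ff Q a k = Abs_fps (\<lambda>i. if i = 0 then 1 else (Q + 1 - a) / (Q - 1) * (Q ^ i - 1) * (1 / Q ^ k) ^ i)"

definition NN :: "real \<Rightarrow> real \<Rightarrow> nat \<Rightarrow> real fps" where
  "NN Q a k = 1 - fps_const (a / Q ^ k) * fps_X + fps_const (Q / Q ^ (2 * k)) * fps_X ^ 2"

definition DD :: "real \<Rightarrow> nat \<Rightarrow> real fps" where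
  "DD Q k = (1 - fps_const (1 / Q ^ k) * fps_X) * (1 - fps_const (Q / Q ^ k) * fps_X)"

lemma mult_lin_nth: "fps_nth ((f::real fps) * (1 - fps_const c * fps_X)) n = fps_nth f n - (if n = 0 then 0 else c * fps_nth f (n - 1))"
proof -
  have "f * (1 - fps_const c * fps_X) = f - fps_const c * (fps_X * f)"
    by (simp add: right_diff_distrib mult.commute mult.left_commute)
  then show ?thesis by simp
qed

lemma NN_nth: "fps_nth (NN Q a k) n = (if n = 0 then 1 else 0) - (if n = 1 then a / Q ^ k else 0) + (if n = 2 then Q / Q ^ (2 * k) else 0)"
  by (simp add: NN_def)

lemma ff_nth0 [simp]: "fps_nth (ff Q a k) 0 = 1" by (simp add: ff_def)

lemma ff_DD:
  assumes Q: "1 < Q"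
  shows "ff Q a k * DD Q k = NN Q a k"
proof (rule fps_ext)
  fix n
  define x where "x = 1 / Q ^ k"
  define r where "r = (Q + 1 - a) / (Q - 1)"
  have Q1: "Q - 1 \<noteq> 0" using Q by simp
  have ffn: "fps_nth (ff Q a k) i = (if i = 0 then 1 else r * (Q ^ i - 1) * x ^ i)" for i
    by (simp add: ff_def r_def x_def)
  have DDe: "DD Q k = (1 - fps_const x * fps_X) * (1 - fps_const (Q * x) * fps_X)"
    by (simp add: DD_def x_def)
  have e1: "a / Q ^ k = a * x" "Q / Q ^ (2 * k) = Q * x ^ 2" unfolding x_def
    by (simp_all add: power_mult power_divide field_simps)
  have rr: "r * (Q - 1) = Q + 1 - a" unfolding r_def using Q1 by simp
  have "fps_nth (ff Q a k * DD Q k) n = fps_nth ((ff Q a k * (1 - fps_const x * fps_X)) * (1 - fps_const (Q * x) * fps_X)) n"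
    by (simp add: DDe mult.assoc)
  also have "\<dots> = fps_nth (ff Q a k) n - (if n = 0 then 0 else x * fps_nth (ff Q a k) (n - 1))
     - (if n = 0 then 0 else Q * x * (fps_nth (ff Q a k) (n - 1) - (if n - 1 = 0 then 0 else x * fps_nth (ff Q a k) (n - 1 - 1))))"
    by (simp only: mult_lin_nth)
  also have "\<dots> = fps_nth (NN Q a k) n"
  proof (cases n)
    case 0 then show ?thesis by (simp add: NN_nth)
  next
    case (Suc m)
    show ?thesis
    proof (cases m)
      case 0
      have h: "a * x + Q * (r * x) = x + (Q * x + r * x)"
      proof -
        have "(a + Q*r) * x = (1 + (Q + r)) * x" using rr by (simp add: algebra_simps)
        then show ?thesis by (simp add: algebra_simps)
      qed
      show ?thesis using Suc 0 h by (simp add: ffn NN_nth e1 algebra_simps)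
    next
      case (Suc m')
      note mm = Suc
      show ?thesis
      proof (cases m')
        case 0
        have "r * (Q * Q - 1) * (x * x) - x * (r * (Q - 1) * x) - Q * x * (r * (Q - 1) * x - x) = Q * x^2"
          by (simp add: algebra_simps power2_eq_square)
        then show ?thesis using \<open>n = Suc m\<close> mm 0 by (simp add: ffn NN_nth e1 power2_eq_square)
      next
        case (Suc j)
        have "r * (Q ^ Suc (Suc (Suc j)) - 1) * x ^ Suc (Suc (Suc j)) - x * (r * (Q ^ Suc (Suc j) - 1) * x ^ Suc (Suc j))
          - Q * x * (r * (Q ^ Suc (Suc j) - 1) * x ^ Suc (Suc j) - x * (r * (Q ^ Suc j - 1) * x ^ Suc j)) = 0"
          by (simp add: algebra_simps)
        then show ?thesis using \<open>n = Suc m\<close> mm Suc by (simp add: ffn NN_nth)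
      qed
    qed
  qed
  finally show "fps_nth (ff Q a k * DD Q k) n = fps_nth (NN Q a k) n" .
qed


lemma DD_nth0 [simp]: "fps_nth (DD Q k) 0 = 1" by (simp add: DD_def)

lemma pf_ff:
  assumes Q: "1 < Q"
  shows "prod_factor Q a k = ff Q a k"
proof -
  have "prod_factor Q a k = NN Q a k * inverse (DD Q k)"
    by (simp add: prod_factor_def NN_def DD_def)
  also have "\<dots> = ff Q a k * (DD Q k * inverse (DD Q k))"
    unfolding ff_DD[OF Q, symmetric] by (simp add: mult.assoc)
  also have "DD Q k * inverse (DD Q k) = 1" by (rule inverse_mult_eq_1') simp
  finally show ?thesis by simp
qed

lemma fscale_ff:
  assumes Q: "1 < Q"
  shows "fscale Q (ff Q a (Suc k)) = ff Q a k"
proof (rule fps_ext)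
  fix n
  have Q0: "Q \<noteq> 0" using Q by simp
  have q1: "Q * (1 / Q ^ Suc k) = 1 / Q ^ k" using Q0 by simp
  have "Q ^ n * (1 / Q ^ Suc k) ^ n = (Q * (1 / Q ^ Suc k)) ^ n" by (rule power_mult_distrib[symmetric])
  also have "\<dots> = (1 / Q ^ k) ^ n" unfolding q1 ..
  finally have "Q ^ n * (1 / Q ^ Suc k) ^ n = (1 / Q ^ k) ^ n" .
  then show "fps_nth (fscale Q (ff Q a (Suc k))) n = fps_nth (ff Q a k) n"
    by (simp add: ff_def mult_ac)
qed

definition PP :: "real \<Rightarrow> real \<Rightarrow> nat \<Rightarrow> real fps" where
  "PP Q a K = (\<Prod>k=1..K. ff Q a k)"

lemma PP_Suc: "PP Q a (Suc K) = PP Q a K * ff Q a (Suc K)"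
  by (simp add: PP_def)

lemma PP_key:
  assumes Q: "1 < Q"
  shows "fscale Q (PP Q a K) * ff Q a K = ff Q a 0 * PP Q a K"
proof (induction K)
  case 0 then show ?case by (simp add: PP_def)
next
  case (Suc K)
  have "fscale Q (PP Q a (Suc K)) * ff Q a (Suc K) = (fscale Q (PP Q a K) * ff Q a K) * ff Q a (Suc K)"
    by (simp add: PP_Suc fscale_mult fscale_ff[OF Q])
  also have "\<dots> = ff Q a 0 * PP Q a (Suc K)" unfolding Suc.IH PP_Suc by (simp only: mult.assoc)
  finally show ?case .
qed

lemma PP_nth0: "fps_nth (PP Q a K) 0 = 1"
  by (induction K) (simp_all add: PP_def)

lemma PP_key2:
  assumes Q: "1 < Q"
  shows "fscale Q (PP Q a K) * (NN Q a K * DD Q 0) = PP Q a K * (NN Q a 0 * DD Q K)"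
proof -
  have "fscale Q (PP Q a K) * (NN Q a K * DD Q 0) = (fscale Q (PP Q a K) * ff Q a K) * DD Q K * DD Q 0"
    by (simp add: ff_DD[OF Q, symmetric] mult_ac)
  also have "\<dots> = PP Q a K * (ff Q a 0 * DD Q 0) * DD Q K"
    unfolding PP_key[OF Q] by (simp only: mult_ac)
  also have "\<dots> = PP Q a K * (NN Q a 0 * DD Q K)"
    unfolding ff_DD[OF Q] by (simp only: mult.assoc)
  finally show ?thesis .
qed


lemma tendsto_fps_mult_nth:
  fixes f g :: "nat \<Rightarrow> real fps" and F G :: "real fps"
  assumes "\<And>i. (\<lambda>K. fps_nth (f K) i) \<longlonglongrightarrow> fps_nth F i"
    and "\<And>i. (\<lambda>K. fps_nth (g K) i) \<longlonglongrightarrow> fps_nth G i"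
  shows "(\<lambda>K. fps_nth (f K * g K) n) \<longlonglongrightarrow> fps_nth (F * G) (n::nat)"
  unfolding fps_mult_nth by (intro tendsto_sum tendsto_mult assms)

lemma inv_pow_lim:
  assumes Q: "1 < (Q::real)"
  shows "(\<lambda>K. c / Q ^ K) \<longlonglongrightarrow> 0" "(\<lambda>K. c / Q ^ (2 * K)) \<longlonglongrightarrow> 0"
proof -
  show "(\<lambda>K. c / Q ^ K) \<longlonglongrightarrow> 0"
    using tendsto_mult[OF tendsto_const LIMSEQ_inverse_realpow_zero[OF Q], of c]
    by (simp add: divide_inverse)
  have Q2: "1 < Q ^ 2" using Q by (simp add: one_less_power)
  show "(\<lambda>K. c / Q ^ (2 * K)) \<longlonglongrightarrow> 0"
    using tendsto_mult[OF tendsto_const LIMSEQ_inverse_realpow_zero[OF Q2], of c]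
    by (simp add: divide_inverse power_mult)
qed

lemma NN_lim:
  assumes Q: "1 < Q"
  shows "(\<lambda>K. fps_nth (NN Q a K) i) \<longlonglongrightarrow> fps_nth (1::real fps) i"
proof -
  consider "i = 0" | "i = 1" | "i = 2" | "2 < i" by linarith
  then show ?thesis
  proof cases
    case 1 then show ?thesis by (simp add: NN_nth)
  next
    case 2
    have "(\<lambda>K. 0 - a / Q ^ K) \<longlonglongrightarrow> 0 - 0" by (intro tendsto_intros inv_pow_lim[OF Q])
    then show ?thesis using 2 by (simp add: NN_nth)
  next
    case 3
    have "(\<lambda>K. Q / Q ^ (2 * K)) \<longlonglongrightarrow> 0" by (rule inv_pow_lim[OF Q])
    then show ?thesis using 3 by (simp add: NN_nth)
  next
    case 4 then show ?thesis by (simp add: NN_nth)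
  qed
qed

lemma DD_nth:
  "fps_nth (DD Q k) i = (if i = 0 then 1 else if i = 1 then - (1 / Q ^ k + Q / Q ^ k) else if i = 2 then (1 / Q ^ k) * (Q / Q ^ k) else 0)"
proof -
  have "DD Q k = (1 * (1 - fps_const (1 / Q ^ k) * fps_X)) * (1 - fps_const (Q / Q ^ k) * fps_X)"
    by (simp add: DD_def)
  then have "fps_nth (DD Q k) i = fps_nth (1::real fps) i - (if i = 0 then 0 else 1 / Q ^ k * fps_nth (1::real fps) (i - 1))
     - (if i = 0 then 0 else Q / Q ^ k * (fps_nth (1::real fps) (i - 1) - (if i - 1 = 0 then 0 else 1 / Q ^ k * fps_nth (1::real fps) (i - 1 - 1))))"
    by (simp only: mult_lin_nth)
  then show ?thesis by (auto simp: algebra_simps)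
qed

lemma DD_lim:
  assumes Q: "1 < Q"
  shows "(\<lambda>K. fps_nth (DD Q K) i) \<longlonglongrightarrow> fps_nth (1::real fps) i"
proof -
  consider "i = 0" | "i = 1" | "i = 2" | "2 < i" by linarith
  then show ?thesis
  proof cases
    case 1 then show ?thesis by (simp add: DD_nth)
  next
    case 2
    have "(\<lambda>K. - (1 / Q ^ K + Q / Q ^ K)) \<longlonglongrightarrow> - (0 + 0)" by (intro tendsto_intros inv_pow_lim[OF Q])
    then show ?thesis using 2 by (simp add: DD_nth)
  next
    case 3
    have "(\<lambda>K. (1 / Q ^ K) * (Q / Q ^ K)) \<longlonglongrightarrow> 0 * 0" by (intro tendsto_intros inv_pow_lim[OF Q])
    then show ?thesis using 3 by (simp add: DD_nth)
  next
    case 4 then show ?thesis by (simp add: DD_nth)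
  qed
qed

lemma sum_split_last: "(\<Sum>i=0..(n::nat). f i) = (\<Sum>i<n. f i) + (f n :: real)"
  by (simp add: atLeastLessThanSuc_atLeastAtMost[symmetric] atLeast0LessThan)

lemma bb_value:
  assumes Q: "1 < Q" and n: "0 < n"
  shows "(\<Sum>i<n. bb Q a i * fps_nth (NN Q a 0) (n - i) - Q ^ i * bb Q a i * fps_nth (DD Q 0) (n - i)) = (Q ^ n - 1) * bb Q a n"
proof (cases n)
  case 0 then show ?thesis using n by simp
next
  case (Suc m)
  have Q1: "Q - 1 \<noteq> 0" using Q by simp
  show ?thesis
  proof (cases m)
    case 0
    then show ?thesis using Suc Q1 by (simp add: NN_nth DD_nth field_simps)
  next
    case (Suc m')
    have n2: "n = Suc (Suc m')" using \<open>n = Suc m\<close> Suc by simp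
    let ?g = "\<lambda>i. bb Q a i * fps_nth (NN Q a 0) (n - i) - Q ^ i * bb Q a i * fps_nth (DD Q 0) (n - i)"
    have "(\<Sum>i<n. ?g i) = (\<Sum>i<m'. ?g i) + ?g m' + ?g (Suc m')" unfolding n2 by simp
    also have "(\<Sum>i<m'. ?g i) = 0"
      by (rule sum.neutral) (auto simp: n2 NN_nth DD_nth)
    also have "?g m' = bb Q a m' * (Q - Q ^ m' * Q)" by (simp add: n2 NN_nth DD_nth algebra_simps)
    also have "?g (Suc m') = bb Q a (Suc m') * (Q ^ Suc m' * (1 + Q) - a)" by (simp add: n2 NN_nth DD_nth algebra_simps)
    also have "0 + bb Q a m' * (Q - Q ^ m' * Q) + bb Q a (Suc m') * (Q ^ Suc m' * (1 + Q) - a) = (Q ^ n - 1) * bb Q a n"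
    proof -
      have d: "Q ^ (m'+2) - 1 \<noteq> 0" using pow_ne1[OF Q, of "m'+2"] by simp
      have "bb Q a (Suc (Suc m')) = ((Q ^ (m'+1) + Q ^ (m'+2) - a) * bb Q a (Suc m') + (Q - Q ^ (m'+1)) * bb Q a m') / (Q ^ (m'+2) - 1)"
        by (rule bb.simps(3))
      then show ?thesis unfolding n2 using d by (simp add: field_simps)
    qed
    finally show ?thesis .
  qed
qed

lemma PP_lim:
  assumes Q: "1 < Q"
  shows "(\<lambda>K. fps_nth (PP Q a K) n) \<longlonglongrightarrow> bb Q a n"
proof (induction n rule: less_induct)
  case (less n)
  show ?case
  proof (cases n)
    case 0 then show ?thesis by (simp add: PP_nth0)
  next
    case (Suc m)
    have n0: "0 < n" using Suc by simp
    define M where "M K = NN Q a K * DD Q 0" for K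
    define H where "H K = NN Q a 0 * DD Q K" for K
    let ?p = "\<lambda>K i. fps_nth (PP Q a K) i"
    have M0: "fps_nth (M K) 0 = 1" for K by (simp add: M_def NN_def)
    have H0: "fps_nth (H K) 0 = 1" for K by (simp add: H_def NN_def)
    have eq: "?p K n = ((\<Sum>i<n. ?p K i * fps_nth (H K) (n - i)) - (\<Sum>i<n. Q ^ i * ?p K i * fps_nth (M K) (n - i))) / (Q ^ n - 1)" for K
    proof -
      have "fps_nth (fscale Q (PP Q a K) * M K) n = fps_nth (PP Q a K * H K) n"
        using PP_key2[OF Q, of a K] by (simp add: M_def H_def)
      then have "(\<Sum>i<n. Q ^ i * ?p K i * fps_nth (M K) (n - i)) + Q ^ n * ?p K n = (\<Sum>i<n. ?p K i * fps_nth (H K) (n - i)) + ?p K n"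
        unfolding fps_mult_nth sum_split_last by (simp add: M0 H0)
      moreover have "Q ^ n - 1 \<noteq> 0" using pow_ne1[OF Q n0] by linarith
      ultimately show ?thesis by (simp add: field_simps)
    qed
    have lM: "(\<lambda>K. fps_nth (M K) j) \<longlonglongrightarrow> fps_nth (DD Q 0) j" for j
    proof -
      have "(\<lambda>K. fps_nth (NN Q a K * DD Q 0) j) \<longlonglongrightarrow> fps_nth (1 * DD Q 0) j"
        by (rule tendsto_fps_mult_nth) (use NN_lim[OF Q] in auto)
      then show ?thesis by (simp add: M_def)
    qed
    have lH: "(\<lambda>K. fps_nth (H K) j) \<longlonglongrightarrow> fps_nth (NN Q a 0) j" for j
    proof -
      have "(\<lambda>K. fps_nth (NN Q a 0 * DD Q K) j) \<longlonglongrightarrow> fps_nth (NN Q a 0 * 1) j"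
        by (rule tendsto_fps_mult_nth) (use DD_lim[OF Q] in auto)
      then show ?thesis by (simp add: H_def)
    qed
    have "(\<lambda>K. ((\<Sum>i<n. ?p K i * fps_nth (H K) (n - i)) - (\<Sum>i<n. Q ^ i * ?p K i * fps_nth (M K) (n - i))) / (Q ^ n - 1))
      \<longlonglongrightarrow> ((\<Sum>i<n. bb Q a i * fps_nth (NN Q a 0) (n - i)) - (\<Sum>i<n. Q ^ i * bb Q a i * fps_nth (DD Q 0) (n - i))) / (Q ^ n - 1)"
      using pow_ne1[OF Q n0] by (intro tendsto_intros less.IH lH lM) auto
    also have "((\<Sum>i<n. bb Q a i * fps_nth (NN Q a 0) (n - i)) - (\<Sum>i<n. Q ^ i * bb Q a i * fps_nth (DD Q 0) (n - i))) / (Q ^ n - 1) = bb Q a n"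
    proof -
      have "Q ^ n - 1 \<noteq> 0" using pow_ne1[OF Q n0] by linarith
      then show ?thesis using bb_value[OF Q n0, of a] by (simp add: sum_subtractf field_simps)
    qed
    finally show ?thesis unfolding eq[symmetric] .
  qed
qed

theorem theorem3p4:
  fixes q :: nat and ns :: "nat list" and a Q :: real
  assumes "prime_power q"
    and "\<forall>n\<in>set ns. 0 < n"
    and "Q = real q ^ prod_list ns"
  shows "\<forall>n. (\<lambda>K. fps_nth (\<Prod>k = 1..K. prod_factor Q a k) n) \<longlonglongrightarrow> beta_star Q a n"
proof
  fix n
  obtain p r where pr: "prime p" "0 < r" "q = p ^ r" using assms(1) unfolding prime_power_def by blast
  have p2: "2 \<le> p" using pr(1) by (simp add: prime_ge_2_nat)
  have "p \<le> q" unfolding pr(3) using pr(2) p2 by (simp add: self_le_power)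
  then have q2: "2 \<le> q" using p2 by simp
  have m0: "prod_list ns \<noteq> 0" using assms(2) by (auto simp: prod_list_zero_iff)
  have q1: "1 < real q" using q2 by simp
  have Q: "1 < Q" unfolding assms(3) using q1 m0 by (simp add: one_less_power)
  have eq: "(\<Prod>k = 1..K. prod_factor Q a k) = PP Q a K" for K
    unfolding PP_def using pf_ff[OF Q] by simp
  show "(\<lambda>K. fps_nth (\<Prod>k = 1..K. prod_factor Q a k) n) \<longlonglongrightarrow> beta_star Q a n"
    unfolding eq beta_bb[OF Q] by (rule PP_lim[OF Q])
qed

end
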